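(* In the real plane, consider the conics $$\mathcal{C}:\ y=x^2\qquad\text{and}\qquad \Gamma:\ \alpha y=x^2+\beta xy+\gamma y^2,\quad \alpha\neq 1.$$ Then there is a closed polygonal line with $n$ sides inscribed in $\Gamma$ and circumscribed about $\mathcal{C}$ if and only if the following conditions are satisfied: (a) $\alpha=\cos^2\dfrac{\pi m}{n}$, where $m,n$ are positive integers with $2m<n$; and (b) $\beta^2-4\gamma(1-\alpha)>0$.
   Context: The conics are considered in an affine chart of the real projective plane. A polygonal line $A_1A_2\dots$ is inscribed in $\Gamma$ and circumscribed about $\mathcal{C}$ if all vertices $A_i$ lie on $\Gamma$ and each side line $A_iA_{i+1}$ is tangent to $\mathcal{C}$, consecutive sides through $A_i$ being the two distinct tangent lines from $A_i$ to $\mathcal{C}$. It is closed with $n$ sides if $A_{n+1}=A_1$. *)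

theory Defs
  imports Complex_Main
begin

definition on_C :: "real \<times> real \<Rightarrow> bool" where
  "on_C p \<longleftrightarrow> snd p = (fst p)^2"

definition on_Gamma :: "real \<Rightarrow> real \<Rightarrow> real \<Rightarrow> real \<times> real \<Rightarrow> bool" where
  "on_Gamma \<alpha> \<beta> \<gamma> p \<longleftrightarrow>
     \<alpha> * snd p = (fst p)^2 + \<beta> * fst p * snd p + \<gamma> * (snd p)^2"

text \<open>The line through two points P and Q (a genuine line when P differs from Q).\<close>
definition line_thr :: "real \<times> real \<Rightarrow> real \<times> real \<Rightarrow> (real \<times> real) set" where
  "line_thr P Q = {p. \<exists>s::real. p = (fst P + s * (fst Q - fst P), snd P + s * (snd Q - snd P))}"

definition tangent_line_C :: "real \<Rightarrow> (real \<times> real) set" where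
  "tangent_line_C t = {p. snd p = 2 * t * fst p - t^2}"

definition tangent_to_C :: "(real \<times> real) set \<Rightarrow> bool" where
  "tangent_to_C L \<longleftrightarrow> (\<exists>t. L = tangent_line_C t)"

text \<open>A closed polygonal line A_1 ... A_n (A_{n+1} = A_1) inscribed in Gamma and
  circumscribed about C, encoded as an n-periodic vertex sequence: every vertex lies
  on Gamma, consecutive vertices are distinct, each side line is tangent to C, and the
  two sides through each vertex are distinct lines (the two tangents from it to C).\<close>
definition closed_poncelet_polygon ::
  "real \<Rightarrow> real \<Rightarrow> real \<Rightarrow> nat \<Rightarrow> (nat \<Rightarrow> real \<times> real) \<Rightarrow> bool" where
  "closed_poncelet_polygon \<alpha> \<beta> \<gamma> n A \<longleftrightarrow>
     (\<forall>i. A (i + n) = A i) \<and>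
     (\<forall>i. on_Gamma \<alpha> \<beta> \<gamma> (A i)) \<and>
     (\<forall>i. A i \<noteq> A (Suc i)) \<and>
     (\<forall>i. tangent_to_C (line_thr (A i) (A (Suc i)))) \<and>
     (\<forall>i. line_thr (A i) (A (Suc i)) \<noteq> line_thr (A (Suc i)) (A (Suc (Suc i))))"

end

theory Submission
  imports Defs "HOL-Analysis.Continuum_Not_Denumerable"
begin


lemma tl_inj: "tangent_line_C s = tangent_line_C t \<Longrightarrow> s = t"
proof -
  assume h: "tangent_line_C s = tangent_line_C t"
  have "(0::real, -(s^2)) \<in> tangent_line_C s" "(1::real, 2*s - s^2) \<in> tangent_line_C s"
    by (auto simp: tangent_line_C_def)
  hence "(0::real, -(s^2)) \<in> tangent_line_C t" "(1::real, 2*s - s^2) \<in> tangent_line_C t" using h by auto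
  hence "s^2 = t^2" "2*s - s^2 = 2*t - t^2" by (auto simp: tangent_line_C_def)
  thus "s = t" by simp
qed

lemma line_thr_mem: "P \<in> line_thr P Q" "Q \<in> line_thr P Q"
  unfolding line_thr_def
  by (auto simp: prod_eq_iff intro: exI[of _ 0] exI[of _ 1])

lemma line_thr_tl:
  assumes "P \<in> tangent_line_C t" "Q \<in> tangent_line_C t" "P \<noteq> Q"
  shows "line_thr P Q = tangent_line_C t"
proof -
  obtain x1 y1 x2 y2 where PQ: "P = (x1,y1)" "Q = (x2,y2)" by (cases P, cases Q)
  have y1: "y1 = 2*t*x1 - t^2" and y2: "y2 = 2*t*x2 - t^2" using assms PQ by (auto simp: tangent_line_C_def)
  have ne: "x1 \<noteq> x2" using assms(3) PQ y1 y2 by auto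
  show ?thesis
  proof
    show "line_thr P Q \<subseteq> tangent_line_C t"
    proof
      fix p assume "p \<in> line_thr P Q"
      then obtain s where "p = (x1 + s*(x2-x1), y1 + s*(y2-y1))" unfolding line_thr_def PQ by auto
      thus "p \<in> tangent_line_C t" unfolding tangent_line_C_def by (simp add: y1 y2 algebra_simps)
    qed
    show "tangent_line_C t \<subseteq> line_thr P Q"
    proof
      fix p assume "p \<in> tangent_line_C t"
      then obtain x y where p: "p = (x,y)" "y = 2*t*x - t^2" by (cases p) (auto simp: tangent_line_C_def)
      define s where "s = (x - x1)/(x2 - x1)"
      have "x = x1 + s*(x2-x1)" using ne by (simp add: s_def)
      moreover have "y = y1 + s*(y2-y1)" using ne by (simp add: s_def y1 y2 p field_simps)
      ultimately show "p \<in> line_thr P Q" unfolding line_thr_def PQ p by auto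
    qed
  qed
qed

lemma vertex:
  assumes "p \<in> tangent_line_C s" "p \<in> tangent_line_C t" "s \<noteq> t"
  shows "p = ((s+t)/2, s*t)"
proof -
  obtain x y where p: "p = (x,y)" by (cases p)
  have "y = 2*s*x - s^2" "y = 2*t*x - t^2" using assms p by (auto simp: tangent_line_C_def)
  hence "2*x*(s-t) = (s+t)*(s-t)" by (simp add: algebra_simps power2_eq_square)
  hence x: "x = (s+t)/2" using assms(3) by simp
  with \<open>y = 2*s*x - s^2\<close> have "y = s*t" by (simp add: algebra_simps power2_eq_square)
  with x p show ?thesis by simp
qed

lemma vertex_in: "((s+t)/2, s*t) \<in> tangent_line_C s" "((s+t)/2, s*t) \<in> tangent_line_C t"
  by (auto simp: tangent_line_C_def algebra_simps power2_eq_square)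

definition PP :: "real \<Rightarrow> real \<Rightarrow> real \<Rightarrow> real \<Rightarrow> real \<Rightarrow> bool" where
  "PP \<alpha> \<beta> \<gamma> a b \<longleftrightarrow> (a+b)^2 + 2*\<beta>*(a+b) + 4*\<gamma> - 4*\<alpha>*a*b = 0"

lemma gamma_PP:
  assumes "s \<noteq> 0" "t \<noteq> 0"
  shows "on_Gamma \<alpha> \<beta> \<gamma> ((s+t)/2, s*t) \<longleftrightarrow> PP \<alpha> \<beta> \<gamma> (1/s) (1/t)"
proof -
  have k: "4*(1/s)^2*(1/t)^2 \<noteq> 0" using assms by simp
  have "on_Gamma \<alpha> \<beta> \<gamma> ((s+t)/2, s*t) \<longleftrightarrow> \<alpha>*(s*t) = ((s+t)/2)^2 + \<beta>*((s+t)/2)*(s*t) + \<gamma>*(s*t)^2"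
    unfolding on_Gamma_def by simp
  also have "\<dots> \<longleftrightarrow> 4*(1/s)^2*(1/t)^2*(\<alpha>*(s*t)) = 4*(1/s)^2*(1/t)^2*(((s+t)/2)^2 + \<beta>*((s+t)/2)*(s*t) + \<gamma>*(s*t)^2)"
    using k by simp
  also have "4*(1/s)^2*(1/t)^2*(\<alpha>*(s*t)) = 4*\<alpha>*(1/s)*(1/t)"
    using assms by (simp add: field_simps power2_eq_square)
  also have "4*(1/s)^2*(1/t)^2*(((s+t)/2)^2 + \<beta>*((s+t)/2)*(s*t) + \<gamma>*(s*t)^2) = (1/s+1/t)^2 + 2*\<beta>*(1/s+1/t) + 4*\<gamma>"
    using assms by (simp add: field_simps power2_eq_square)
  finally show ?thesis unfolding PP_def by linarith
qed

lemma gamma_zero: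
  assumes "on_Gamma \<alpha> \<beta> \<gamma> ((s+t)/2, s*t)" "s = 0 \<or> t = 0"
  shows "s = t"
  using assms unfolding on_Gamma_def by (auto simp: power2_eq_square)



lemma per_mult: "(\<forall>i. d (i + n) = d i) \<Longrightarrow> d (i + (k::nat)*n) = d i"
  by (induction k arbitrary: i) (auto simp: add.assoc[symmetric])

lemma seq_minus1:
  fixes d :: "nat \<Rightarrow> real"
  assumes n: "n > 0" and per: "\<forall>i. d (i + n) = d i"
    and rec: "\<forall>i. d (i+2) = -2*d (i+1) - d i" and ne: "d 0 \<noteq> d 2"
  shows False
proof -
  define e where "e i = (-1)^i * d i" for i
  have erec: "e (i+2) = 2*e (i+1) - e i" for i
  proof -
    have "(-1)^i*(d (i+2)) = (-1)^i*(-2*d (i+1) - d i)" using rec by simp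
    thus ?thesis by (simp add: e_def algebra_simps)
  qed
  have ed: "e (i+1) - e i = e 1 - e 0" for i
  proof (induction i)
    case (Suc i)
    have "e (Suc i + 1) - e (Suc i) = e (i+1) - e i" using erec[of i]
      by (simp add: numeral_2_eq_2)
    thus ?case using Suc by simp
  qed simp
  have ei: "e i = e 0 + real i * (e 1 - e 0)" for i
  proof (induction i)
    case (Suc i) thus ?case using ed[of i] by (simp add: algebra_simps)
  qed simp
  have "d (0 + 2*n) = d 0" using per_mult[OF per, of 0 2] by simp
  hence "e (2*n) = e 0" by (simp add: e_def power_mult)
  with ei[of "2*n"] n have "e 1 = e 0" by simp
  hence "e 2 = e 0" using ei[of 2] by simp
  thus False using ne by (simp add: e_def)
qed

lemma seq_root:
  fixes d :: "nat \<Rightarrow> real"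
  assumes n: "n > 0" and per: "\<forall>i. d (i + n) = d i"
    and rec: "\<forall>i. d (i+2) = 2*c*d (i+1) - d i" and ne: "d 0 \<noteq> d 1" and c: "c^2 \<noteq> 1"
  shows "\<exists>k<n. c = cos (2*pi*real k/real n)"
proof -
  obtain l :: complex where l: "l^2 - 2*of_real c*l + 1 = 0"
  proof (cases "c^2 \<le> 1")
    case True
    define l where "l = Complex c (sqrt (1-c^2))"
    have s: "(sqrt (1-c^2))^2 = 1 - c^2" using True by simp
    have "l^2 - 2*of_real c*l + 1 = 0" unfolding l_def
      using s by (simp add: complex_eq_iff power2_eq_square algebra_simps)
    thus ?thesis using that by blast
  next
    case False
    define l where "l = complex_of_real (c + sqrt (c^2-1))"
    have s: "(sqrt (c^2-1))^2 = c^2 - 1" using False by simp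
    have "(c + sqrt (c^2-1))^2 - 2*c*(c + sqrt (c^2-1)) + 1 = 0"
      using s by (simp add: power2_eq_square algebra_simps)
    hence "complex_of_real ((c + sqrt (c^2-1))^2 - 2*c*(c + sqrt (c^2-1)) + 1) = 0" by simp
    hence "l^2 - 2*of_real c*l + 1 = 0" unfolding l_def by simp
    thus ?thesis using that by blast
  qed
  define m where "m = 2*of_real c - l"
  have lm: "l*m = 1" using l by (simp add: m_def power2_eq_square algebra_simps)
  have lnm: "l \<noteq> m"
  proof
    assume "l = m"
    hence "l = of_real c" by (simp add: m_def)
    with l have "complex_of_real (1 - c^2) = 0" by (simp add: power2_eq_square)
    hence "c^2 = 1" by (metis diff_eq_eq eq_iff_diff_eq_0 of_real_eq_0_iff)
    with c show False by simp
  qed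
  define D where "D i = complex_of_real (d i)" for i
  have Drec: "D (i+2) = 2*of_real c*D (i+1) - D i" for i
    using rec by (simp add: D_def)
  have Dper: "D (i+n) = D i" for i using per by (simp add: D_def)
  define w where "w i = D (i+1) - m * D i" for i
  define v where "v i = D (i+1) - l * D i" for i
  have w1: "w (i+1) = l * w i" for i
  proof -
    have "w (i+1) = (2*of_real c - m) * D (i+1) - D i" unfolding w_def using Drec[of i]
      by (simp add: algebra_simps numeral_2_eq_2)
    also have "\<dots> = l * D (i+1) - (l*m) * D i" using lm by (simp add: m_def)
    also have "\<dots> = l * w i" unfolding w_def by (simp add: algebra_simps)
    finally show ?thesis .
  qed
  have v1: "v (i+1) = m * v i" for i
  proof -
    have "v (i+1) = (2*of_real c - l) * D (i+1) - D i" unfolding v_def using Drec[of i]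
      by (simp add: algebra_simps numeral_2_eq_2)
    also have "\<dots> = m * D (i+1) - (l*m) * D i" using lm by (simp add: m_def)
    also have "\<dots> = m * v i" unfolding v_def by (simp add: algebra_simps)
    finally show ?thesis .
  qed
  have wp: "w i = l^i * w 0" for i
  proof (induction i)
    case (Suc i) thus ?case using w1[of i] by simp
  qed simp
  have vp: "v i = m^i * v 0" for i
  proof (induction i)
    case (Suc i) thus ?case using v1[of i] by simp
  qed simp
  have wn: "w n = w 0" unfolding w_def using Dper[of 0] Dper[of 1] by simp
  have vn: "v n = v 0" unfolding v_def using Dper[of 0] Dper[of 1] by simp
  have ln: "l^n = 1"
  proof (rule ccontr)
    assume a: "l^n \<noteq> 1"
    have "l^n * m^n = 1" using lm by (metis power_mult_distrib power_one)
    hence b: "m^n \<noteq> 1" using a by auto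
    have "(l^n - 1) * w 0 = 0" using wn wp[of n] by (simp add: algebra_simps)
    hence w0: "w 0 = 0" using a by simp
    have "(m^n - 1) * v 0 = 0" using vn vp[of n] by (simp add: algebra_simps)
    hence v0: "v 0 = 0" using b by simp
    have "(l - m) * D 0 = 0" using w0 v0 unfolding w_def v_def by (auto simp: algebra_simps)
    hence "D 0 = 0" using lnm by simp
    moreover hence "D 1 = 0" using w0 unfolding w_def by simp
    ultimately show False using ne by (simp add: D_def)
  qed
  then obtain k where k: "k < n" "l = cis (2*pi*real k/real n)"
    using bij_betw_roots_unity[OF n] unfolding bij_betw_def by auto
  have l0: "l \<noteq> 0" using lm by auto
  have "l + inverse l = 2 * of_real c" using l l0
    by (simp add: field_simps power2_eq_square)
  hence "Re (l + inverse l) = 2*c" by simp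
  hence "c = cos (2*pi*real k/real n)" using k(2) by (simp add: cis.sel)
  with k show ?thesis by blast
qed



lemma cnt1: "countable {\<phi>::real. cos (\<phi> + p) = v}"
proof (cases "\<bar>v\<bar> \<le> 1")
  case False
  hence "{\<phi>::real. cos (\<phi> + p) = v} = {}" using abs_cos_le_one by (metis (mono_tags) empty_Collect_eq)
  thus ?thesis by simp
next
  case True
  define q where "q = arccos v"
  have q: "cos q = v" using True by (simp add: q_def)
  have "{\<phi>::real. cos (\<phi> + p) = v} \<subseteq> range (\<lambda>i::int. 2*of_int i*pi - p - q) \<union> range (\<lambda>i::int. 2*of_int i*pi - p + q)"
  proof
    fix \<phi> assume "\<phi> \<in> {\<phi>::real. cos (\<phi> + p) = v}"
    hence "cos (\<phi> + p) - cos q = 0" using q by simp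
    hence "sin ((\<phi> + p + q)/2) = 0 \<or> sin ((q - (\<phi>+p))/2) = 0" by (simp add: cos_diff_cos)
    thus "\<phi> \<in> range (\<lambda>i::int. 2*of_int i*pi - p - q) \<union> range (\<lambda>i::int. 2*of_int i*pi - p + q)"
    proof
      assume "sin ((\<phi> + p + q)/2) = 0"
      then obtain i::int where "(\<phi> + p + q)/2 = of_int i * pi" by (auto simp: sin_zero_iff_int2)
      hence "\<phi> = 2*of_int i*pi - p - q" by (simp add: field_simps)
      thus ?thesis by auto
    next
      assume "sin ((q - (\<phi>+p))/2) = 0"
      then obtain i::int where "(q - (\<phi>+p))/2 = of_int i * pi" by (auto simp: sin_zero_iff_int2)
      hence "\<phi> = 2*of_int (-i)*pi - p + q" by (simp add: field_simps)
      thus ?thesis by blast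
    qed
  qed
  thus ?thesis by (rule countable_subset) auto
qed

lemma cnt2:
  assumes "sin (\<delta>/2) \<noteq> 0"
  shows "countable {\<phi>::real. cos (\<phi> + p) = cos (\<phi> + p + \<delta>)}"
proof -
  have "{\<phi>::real. cos (\<phi> + p) = cos (\<phi> + p + \<delta>)} \<subseteq> range (\<lambda>i::int. of_int i*pi - p - \<delta>/2)"
  proof
    fix \<phi> assume "\<phi> \<in> {\<phi>::real. cos (\<phi> + p) = cos (\<phi> + p + \<delta>)}"
    hence "cos (\<phi> + p) - cos (\<phi> + p + \<delta>) = 0" by simp
    hence "sin ((\<phi> + p + (\<phi> + p + \<delta>))/2) = 0" using assms by (simp add: cos_diff_cos)
    then obtain i::int where "(\<phi> + p + (\<phi> + p + \<delta>))/2 = of_int i * pi" by (auto simp: sin_zero_iff_int2)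
    hence "\<phi> = of_int i*pi - p - \<delta>/2" by (simp add: field_simps)
    thus "\<phi> \<in> range (\<lambda>i::int. of_int i*pi - p - \<delta>/2)" by auto
  qed
  thus ?thesis by (rule countable_subset) auto
qed

lemma trig_id:
  fixes x \<theta> :: real
  shows   "(cos x)^2 + (cos (x+\<theta>))^2 - 2*cos \<theta>*cos x*cos (x+\<theta>) = (sin \<theta>)^2"
proof -
  have h1: "(sin x)^2 + (cos x)^2 = 1" by simp
  have h2: "(sin \<theta>)^2 + (cos \<theta>)^2 = 1" by simp
  show ?thesis unfolding cos_add using h1 h2 by algebra
qed

lemma PP_inv:
  assumes "\<alpha> \<noteq> 1"
  shows "PP \<alpha> \<beta> \<gamma> a b \<longleftrightarrow>
    (a + \<beta>/(2*(1-\<alpha>)))^2 + (b + \<beta>/(2*(1-\<alpha>)))^2 - 2*(2*\<alpha>-1)*(a + \<beta>/(2*(1-\<alpha>)))*(b + \<beta>/(2*(1-\<alpha>)))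
      = (\<beta>^2 - 4*\<gamma>*(1-\<alpha>))/(1-\<alpha>)"
proof -
  have ne: "1 - \<alpha> \<noteq> 0" using assms by simp
  have "(a + \<beta>/(2*(1-\<alpha>)))^2 + (b + \<beta>/(2*(1-\<alpha>)))^2 - 2*(2*\<alpha>-1)*(a + \<beta>/(2*(1-\<alpha>)))*(b + \<beta>/(2*(1-\<alpha>)))
      - (\<beta>^2 - 4*\<gamma>*(1-\<alpha>))/(1-\<alpha>) = (a+b)^2 + 2*\<beta>*(a+b) + 4*\<gamma> - 4*\<alpha>*a*b"
  proof -
    define k where "k = \<beta>/(2*(1-\<alpha>))"
    have bk: "\<beta> = 2*(1-\<alpha>)*k" using ne by (simp add: k_def)
    have c: "(\<beta>^2 - 4*\<gamma>*(1-\<alpha>))/(1-\<alpha>) = 4*(1-\<alpha>)*k^2 - 4*\<gamma>"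
      using ne unfolding bk by (simp add: field_simps power2_eq_square)
    show ?thesis unfolding c unfolding k_def[symmetric] unfolding bk
      by (simp add: power2_eq_square algebra_simps)
  qed
  thus ?thesis unfolding PP_def by linarith
qed



lemma cos_add_2mpi: "cos (x + 2*real m*pi) = cos (x::real)"
  by (simp add: cos_add)

lemma construct:
  assumes n: "n>0" "0<m" "2*m<n" and al: "\<alpha> = (cos (pi*real m/real n))^2"
    and Dp: "\<beta>^2 - 4*\<gamma>*(1-\<alpha>) > 0"
  shows "\<exists>a::nat\<Rightarrow>real. (\<forall>i. a (i+n) = a i) \<and> (\<forall>i. a i \<noteq> 0) \<and> (\<forall>i. a i \<noteq> a (i+1))
     \<and> (\<forall>i. a i \<noteq> a (i+2)) \<and> (\<forall>i. PP \<alpha> \<beta> \<gamma> (a i) (a (i+1)))"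
proof -
  define \<theta> where "\<theta> = 2*pi*real m/real n"
  have nr: "real n > 0" using n by simp
  have "real (2*m) < real n" using n by linarith
  hence "2*real m < real n" by simp
  hence th: "0 < \<theta>" "\<theta> < pi" unfolding \<theta>_def using n nr by (simp_all add: field_simps)
  have cth: "cos \<theta> = 2*\<alpha> - 1"
  proof -
    have "\<theta> = 2*(pi*real m/real n)" by (simp add: \<theta>_def)
    hence "cos \<theta> = 2*(cos (pi*real m/real n))^2 - 1" by (simp only: cos_double_cos)
    thus ?thesis using al by simp
  qed
  have "cos \<theta> < cos 0" using th by (intro cos_monotone_0_pi) auto
  hence a1: "1 - \<alpha> > 0" using cth by simp
  have st: "sin \<theta> > 0" using th by (simp add: sin_gt_zero)
  have st2: "sin (\<theta>/2) > 0" using th by (intro sin_gt_zero) auto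
  define K where "K = (\<beta>^2 - 4*\<gamma>*(1-\<alpha>))/(1-\<alpha>)"
  have K: "K > 0" using Dp a1 by (simp add: K_def)
  define r where "r = sqrt K / sin \<theta>"
  have r: "r > 0" using K st by (simp add: r_def)
  have rK: "r^2 * (sin \<theta>)^2 = K" using K st by (simp add: r_def power_divide)
  define as where "as = -\<beta>/(2*(1-\<alpha>))"
  define B where "B = (\<Union>i::nat. {\<phi>. cos (\<phi> + real i*\<theta>) = -as/r} \<union>
     {\<phi>. cos (\<phi> + real i*\<theta>) = cos (\<phi> + real i*\<theta> + \<theta>)} \<union>
     {\<phi>. cos (\<phi> + real i*\<theta>) = cos (\<phi> + real i*\<theta> + 2*\<theta>)})"
  have "countable B" unfolding B_def
  proof (intro countable_UN countable_Un)
    fix i :: nat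
    show "countable {\<phi>. cos (\<phi> + real i*\<theta>) = -as/r}" by (rule cnt1)
    show "countable {\<phi>. cos (\<phi> + real i*\<theta>) = cos (\<phi> + real i*\<theta> + \<theta>)}" using st2 by (intro cnt2) auto
    show "countable {\<phi>. cos (\<phi> + real i*\<theta>) = cos (\<phi> + real i*\<theta> + 2*\<theta>)}" using st by (intro cnt2) auto
  qed simp
  hence "B \<noteq> UNIV" using uncountable_UNIV_real by auto
  then obtain \<phi> where phi: "\<phi> \<notin> B" by auto
  define a where "a i = as + r*cos (\<phi> + real i*\<theta>)" for i
  have a1s: "a (i+1) = as + r*cos (\<phi> + real i*\<theta> + \<theta>)" for i
  proof -
    have "\<phi> + real (i+1)*\<theta> = \<phi> + real i*\<theta> + \<theta>" by (simp add: algebra_simps)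
    then show ?thesis unfolding a_def by (simp only:)
  qed
  have a2s: "a (i+2) = as + r*cos (\<phi> + real i*\<theta> + 2*\<theta>)" for i
  proof -
    have "\<phi> + real (i+2)*\<theta> = \<phi> + real i*\<theta> + 2*\<theta>" by (simp add: algebra_simps)
    then show ?thesis unfolding a_def by (simp only:)
  qed
  have per: "a (i+n) = a i" for i
  proof -
    have "real (i+n)*\<theta> = real i*\<theta> + 2*real m*pi" using nr by (simp add: \<theta>_def field_simps)
    hence "\<phi> + real (i+n)*\<theta> = (\<phi> + real i*\<theta>) + 2*real m*pi" by simp
    thus ?thesis unfolding a_def by (simp only: cos_add_2mpi)
  qed
  have nz: "a i \<noteq> 0" for i
  proof
    assume "a i = 0"
    hence "cos (\<phi> + real i*\<theta>) = -as/r" using r by (simp add: a_def field_simps)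
    thus False using phi unfolding B_def by auto
  qed
  have ne1: "a i \<noteq> a (i+1)" for i
  proof
    assume h: "a i = a (i+1)"
    have "as + r*cos (\<phi> + real i*\<theta>) = as + r*cos (\<phi> + real i*\<theta> + \<theta>)"
      using h unfolding a1s a_def[of i] .
    hence "cos (\<phi> + real i*\<theta>) = cos (\<phi> + real i*\<theta> + \<theta>)" using r by simp
    thus False using phi unfolding B_def by auto
  qed
  have ne2: "a i \<noteq> a (i+2)" for i
  proof
    assume h: "a i = a (i+2)"
    have "as + r*cos (\<phi> + real i*\<theta>) = as + r*cos (\<phi> + real i*\<theta> + 2*\<theta>)"
      using h unfolding a2s a_def[of i] .
    hence "cos (\<phi> + real i*\<theta>) = cos (\<phi> + real i*\<theta> + 2*\<theta>)" using r by simp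
    thus False using phi unfolding B_def by auto
  qed
  have pp: "PP \<alpha> \<beta> \<gamma> (a i) (a (i+1))" for i
  proof -
    have ne: "\<alpha> \<noteq> 1" using a1 by simp
    have e1: "a i + \<beta>/(2*(1-\<alpha>)) = r*cos (\<phi> + real i*\<theta>)" by (simp add: a_def as_def)
    have e2: "a (i+1) + \<beta>/(2*(1-\<alpha>)) = r*cos (\<phi> + real i*\<theta> + \<theta>)" unfolding a1s as_def by simp
    have "(r*cos (\<phi> + real i*\<theta>))^2 + (r*cos (\<phi> + real i*\<theta> + \<theta>))^2
        - 2*(2*\<alpha>-1)*(r*cos (\<phi> + real i*\<theta>))*(r*cos (\<phi> + real i*\<theta> + \<theta>))
        = r^2*((cos (\<phi> + real i*\<theta>))^2 + (cos (\<phi> + real i*\<theta> + \<theta>))^2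
            - 2*cos \<theta>*cos (\<phi> + real i*\<theta>)*cos (\<phi> + real i*\<theta> + \<theta>))"
      unfolding cth by (simp add: power2_eq_square algebra_simps)
    also have "\<dots> = K" unfolding trig_id using rK by simp
    finally show ?thesis unfolding PP_inv[OF ne] e1 e2 K_def .
  qed
  show ?thesis using per nz ne1 ne2 pp by blast
qed



lemma PP_sym: "PP \<alpha> \<beta> \<gamma> a b = PP \<alpha> \<beta> \<gamma> b a"
  unfolding PP_def by (simp add: algebra_simps)

lemma vieta:
  assumes "PP \<alpha> \<beta> \<gamma> x y" "PP \<alpha> \<beta> \<gamma> z y" "x \<noteq> z"
  shows "x + z = (4*\<alpha>-2)*y - 2*\<beta>"
proof -
  have "(x - z)*(x + z - ((4*\<alpha>-2)*y - 2*\<beta>)) = 0"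
    using assms(1,2) unfolding PP_def by (simp add: algebra_simps power2_eq_square)
  thus ?thesis using assms(3) by simp
qed

lemma posdef:
  fixes x y c :: real
  assumes "c^2 < 1" "x \<noteq> y"
  shows "x^2 + y^2 - 2*c*x*y > 0"
proof -
  have e: "x^2 + y^2 - 2*c*x*y = (x - c*y)^2 + (1 - c^2)*y^2" by (simp add: power2_eq_square algebra_simps)
  show ?thesis
  proof (cases "y = 0")
    case True thus ?thesis using assms by simp
  next
    case False
    hence "(1 - c^2)*y^2 > 0" using assms by simp
    thus ?thesis unfolding e by (smt (verit) zero_le_power2)
  qed
qed

lemma fwd:
  fixes \<alpha> \<beta> \<gamma> :: real and n :: nat
  assumes "\<alpha> \<noteq> 1" and "n > 0" and P: "closed_poncelet_polygon \<alpha> \<beta> \<gamma> n A"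
  shows "(\<exists>m::nat. m > 0 \<and> 2 * m < n \<and> \<alpha> = (cos (pi * real m / real n))^2) \<and>
          \<beta>^2 - 4 * \<gamma> * (1 - \<alpha>) > 0"
proof -
  have per: "\<And>i. A (i + n) = A i" and onG: "\<And>i. on_Gamma \<alpha> \<beta> \<gamma> (A i)"
    and neq: "\<And>i. A i \<noteq> A (Suc i)" and tang: "\<And>i. tangent_to_C (line_thr (A i) (A (Suc i)))"
    and ldist: "\<And>i. line_thr (A i) (A (Suc i)) \<noteq> line_thr (A (Suc i)) (A (Suc (Suc i)))"
    using P unfolding closed_poncelet_polygon_def by auto
  define t where "t i = (SOME t. line_thr (A i) (A (Suc i)) = tangent_line_C t)" for i
  have tl: "line_thr (A i) (A (Suc i)) = tangent_line_C (t i)" for i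
    unfolding t_def using tang[of i] unfolding tangent_to_C_def by (rule someI_ex)
  have tne: "t i \<noteq> t (Suc i)" for i using ldist[of i] tl[of i] tl[of "Suc i"] by auto
  have Af: "A (Suc i) = ((t i + t (Suc i))/2, t i * t (Suc i))" for i
  proof -
    have "A (Suc i) \<in> tangent_line_C (t i)" using line_thr_mem(2)[where P="A i" and Q="A (Suc i)"] tl[of i] by simp
    moreover have "A (Suc i) \<in> tangent_line_C (t (Suc i))"
      using line_thr_mem(1)[where P="A (Suc i)" and Q="A (Suc (Suc i))"] tl[of "Suc i"] by simp
    ultimately show ?thesis using vertex tne by blast
  qed
  have tper: "t (i+n) = t i" for i
  proof -
    have "line_thr (A (i+n)) (A (Suc (i+n))) = line_thr (A i) (A (Suc i))"
      using per[of i] per[of "Suc i"] by simp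
    thus ?thesis using tl[of i] tl[of "i+n"] tl_inj by auto
  qed
  have tne2: "t i \<noteq> t (Suc (Suc i))" for i
    using neq[of "Suc i"] Af[of i] Af[of "Suc i"] by (auto simp: mult.commute)
  have tnz: "t i \<noteq> 0" for i
    using gamma_zero[of \<alpha> \<beta> \<gamma> "t i" "t (Suc i)"] onG[of "Suc i"] Af[of i] tne[of i] by auto
  define a where "a i = 1 / t i" for i
  have pp: "PP \<alpha> \<beta> \<gamma> (a i) (a (Suc i))" for i
    using gamma_PP[OF tnz[of i] tnz[of "Suc i"]] onG[of "Suc i"] Af[of i] by (simp add: a_def)
  have ane: "a i \<noteq> a (Suc i)" for i using tne[of i] tnz by (simp add: a_def)
  have ane2: "a i \<noteq> a (Suc (Suc i))" for i using tne2[of i] tnz by (simp add: a_def)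
  have aper: "a (i+n) = a i" for i using tper by (simp add: a_def)
  have arec: "a i + a (Suc (Suc i)) = (4*\<alpha>-2)*a (Suc i) - 2*\<beta>" for i
    using vieta[OF pp[of i] _ ane2[of i]] pp[of "Suc i"] PP_sym by blast
  define c where "c = 2*\<alpha> - 1"
  define k where "k = \<beta>/(2*(1-\<alpha>))"
  have a1: "1 - \<alpha> \<noteq> 0" using assms(1) by simp
  have bk: "\<beta> = 2*(1-\<alpha>)*k" using a1 by (simp add: k_def)
  define d where "d i = a i + k" for i
  have drec: "d (i+2) = 2*c*d (i+1) - d i" for i
    using arec[of i] unfolding d_def c_def bk by (simp add: algebra_simps numeral_2_eq_2)
  have dper: "\<forall>i. d (i+n) = d i" using aper by (simp add: d_def)
  have d01: "d 0 \<noteq> d 1" using ane[of 0] by (simp add: d_def)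
  have d02: "d 0 \<noteq> d 2" using ane2[of 0] by (simp add: d_def numeral_2_eq_2)
  have c1: "c \<noteq> 1" using assms(1) by (simp add: c_def)
  have cm1: "c \<noteq> -1"
  proof
    assume "c = -1"
    hence "\<forall>i. d (i+2) = -2*d (i+1) - d i" using drec by simp
    thus False using seq_minus1[OF assms(2) dper _ d02] by blast
  qed
  have c2: "c^2 \<noteq> 1" using c1 cm1 by (metis power2_eq_1_iff)
  obtain j where j: "j < n" "c = cos (2*pi*real j/real n)"
    using seq_root[OF assms(2) dper _ d01 c2] drec by blast
  have alc: "\<alpha> = (1 + c)/2" by (simp add: c_def)
  have cd: "cos (2*pi*real j/real n) = 2*(cos (pi*real j/real n))^2 - 1"
  proof -
    have "2*pi*real j/real n = 2*(pi*real j/real n)" by simp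
    thus ?thesis by (simp only: cos_double_cos)
  qed
  have j0: "j \<noteq> 0" using j c1 by (cases "j = 0") auto
  have jh: "2*j \<noteq> n"
  proof
    assume h: "2*j = n"
    hence "2*pi*real j/real n = pi" using assms(2) by (simp add: field_simps flip: of_nat_mult)
    thus False using j cm1 by simp
  qed
  have A1: "\<exists>m::nat. m > 0 \<and> 2 * m < n \<and> \<alpha> = (cos (pi * real m / real n))^2"
  proof (cases "2*j < n")
    case True
    thus ?thesis using j0 alc j cd by (intro exI[of _ j]) auto
  next
    case False
    hence F: "2*(n-j) < n" "n - j > 0" using jh j by auto
    have "pi * real (n-j) / real n = pi - pi*real j/real n" using j assms(2)
      by (simp add: of_nat_diff field_simps)
    hence "(cos (pi * real (n-j) / real n))^2 = (cos (pi*real j/real n))^2" by simp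
    thus ?thesis using F alc j cd by (intro exI[of _ "n-j"]) auto
  qed
  have cl: "c^2 < 1"
  proof -
    have "\<bar>c\<bar> \<le> 1" using j by simp
    hence "c^2 \<le> 1" by (simp add: abs_square_le_1)
    thus ?thesis using c2 by simp
  qed
  have pos: "d 0 ^2 + d 1 ^2 - 2*c*d 0*d 1 > 0" using posdef[OF cl d01] .
  have "d 0 ^2 + d 1 ^2 - 2*c*d 0*d 1 = (\<beta>^2 - 4*\<gamma>*(1-\<alpha>))/(1-\<alpha>)"
    using pp[of 0] unfolding PP_inv[OF assms(1)] by (simp add: d_def c_def k_def)
  moreover have "1 - \<alpha> > 0" using cl alc by (simp add: abs_square_less_1 abs_less_iff)
  ultimately have "\<beta>^2 - 4*\<gamma>*(1-\<alpha>) > 0" using pos by (simp add: zero_less_divide_iff)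
  with A1 show ?thesis by blast
qed

lemma bwd:
  fixes \<alpha> \<beta> \<gamma> :: real and n :: nat
  assumes "n > 0" and m: "m > 0" "2 * m < n" "\<alpha> = (cos (pi * real m / real n))^2"
    and D: "\<beta>^2 - 4 * \<gamma> * (1 - \<alpha>) > 0"
  shows "\<exists>A. closed_poncelet_polygon \<alpha> \<beta> \<gamma> n A"
proof -
  obtain a :: "nat \<Rightarrow> real" where aper: "\<And>i. a (i+n) = a i" and anz: "\<And>i. a i \<noteq> 0"
    and ane: "\<And>i. a i \<noteq> a (i+1)" and ane2: "\<And>i. a i \<noteq> a (i+2)" and pp: "\<And>i. PP \<alpha> \<beta> \<gamma> (a i) (a (i+1))"
    using construct[OF assms(1) m D] by blast
  define t where "t i = 1 / a i" for i
  have tnz: "t i \<noteq> 0" for i using anz by (simp add: t_def)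
  have tne: "t i \<noteq> t (Suc i)" for i using ane[of i] by (simp add: t_def)
  have tne2: "t i \<noteq> t (Suc (Suc i))" for i using ane2[of i] by (simp add: t_def numeral_2_eq_2)
  have tper: "t (i+n) = t i" for i using aper by (simp add: t_def)
  define A where "A i = ((t i + t (Suc i))/2, t i * t (Suc i))" for i
  have "closed_poncelet_polygon \<alpha> \<beta> \<gamma> n A"
    unfolding closed_poncelet_polygon_def
  proof (intro conjI allI)
    fix i
    show "A (i+n) = A i" unfolding A_def using tper[of i] tper[of "Suc i"] by simp
    show "on_Gamma \<alpha> \<beta> \<gamma> (A i)" unfolding A_def gamma_PP[OF tnz tnz]
      using pp[of i] by (simp add: t_def)
    show "A i \<noteq> A (Suc i)" unfolding A_def using tne2[of i] by auto
    have l: "line_thr (A j) (A (Suc j)) = tangent_line_C (t (Suc j))" for j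
    proof (rule line_thr_tl)
      show "A j \<in> tangent_line_C (t (Suc j))" unfolding A_def by (rule vertex_in)
      show "A (Suc j) \<in> tangent_line_C (t (Suc j))" unfolding A_def by (rule vertex_in)
      show "A j \<noteq> A (Suc j)" unfolding A_def using tne2[of j] by auto
    qed
    show "tangent_to_C (line_thr (A i) (A (Suc i)))" unfolding l tangent_to_C_def by blast
    show "line_thr (A i) (A (Suc i)) \<noteq> line_thr (A (Suc i)) (A (Suc (Suc i)))"
      unfolding l using tne[of "Suc i"] tl_inj by blast
  qed
  thus ?thesis by blast
qed

theorem theorem2p7:
  fixes \<alpha> \<beta> \<gamma> :: real and n :: nat
  assumes "\<alpha> \<noteq> 1" and "n > 0"
  shows "(\<exists>A. closed_poncelet_polygon \<alpha> \<beta> \<gamma> n A) \<longleftrightarrow>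
         ((\<exists>m::nat. m > 0 \<and> 2 * m < n \<and> \<alpha> = (cos (pi * real m / real n))^2) \<and>
          \<beta>^2 - 4 * \<gamma> * (1 - \<alpha>) > 0)"
  using fwd[OF assms] bwd[OF assms(2)] by blast

end
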